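(* Let $0<\gamma<1$ and $W_n=\inf\{t\ge0:N_n(t)\le\gamma n\}$. Then there exists a constant $C>0$, depending on $\Lambda$ and $\gamma$ but not on $n$, such that $E[W_n]\le C$ for all $n\ge2$.
   Context: Let $\Lambda$ be a nonzero finite measure on $[0,1]$. For $n\ge 1$, the $\Lambda$-coalescent started with $n$ blocks, $(\Pi_n(t))_{t\ge0}$, is the continuous-time Markov chain on partitions of $\{1,\dots,n\}$, started from the partition into singletons, in which, whenever there are $b$ blocks, each particular collection of $k\ge2$ blocks merges into a single block at rate $\lambda_{b,k}=\int_{[0,1]}p^{k-2}(1-p)^{b-k}\,\Lambda(dp)$, and no other transitions occur. $N_n(t)$ denotes the number of blocks of $\Pi_n(t)$. *)

theory Defs
  imports "HOL-Probability.Probability"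
begin

definition lambda_rate :: "real measure \<Rightarrow> nat \<Rightarrow> nat \<Rightarrow> real" where
  "lambda_rate \<Lambda> b k = (\<integral>p. p ^ (k - 2) * (1 - p) ^ (b - k) \<partial>\<Lambda>)"

(* Partitions of {1..n} are represented as sets of blocks (nat set set). *)
definition singleton_partition :: "nat \<Rightarrow> nat set set" where
  "singleton_partition n = (\<lambda>i. {i}) ` {1..n}"

definition merge_choices :: "nat set set \<Rightarrow> nat set set set" where
  "merge_choices P = {S. S \<subseteq> P \<and> 2 \<le> card S}"

definition merge_blocks :: "nat set set \<Rightarrow> nat set set \<Rightarrow> nat set set" where
  "merge_blocks P S = insert (\<Union>S) (P - S)"

definition total_rate :: "real measure \<Rightarrow> nat set set \<Rightarrow> real" where
  "total_rate \<Lambda> P = (\<Sum>S\<in>merge_choices P. lambda_rate \<Lambda> (card P) (card S))"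

definition jump_pmf :: "real measure \<Rightarrow> nat set set \<Rightarrow> nat set set pmf" where
  "jump_pmf \<Lambda> P = embed_pmf (\<lambda>S. if S \<in> merge_choices P
      then lambda_rate \<Lambda> (card P) (card S) / total_rate \<Lambda> P else 0)"

(* Embedded jump chain (sequence of visited partitions), run for at most m jumps;
   it stops when only one block is left.  Started from n singletons, m = n suffices. *)
primrec jump_path :: "real measure \<Rightarrow> nat \<Rightarrow> nat set set \<Rightarrow> nat set set list pmf" where
  "jump_path \<Lambda> 0 P = return_pmf [P]"
| "jump_path \<Lambda> (Suc m) P =
     (if card P \<le> 1 then return_pmf [P]
      else bind_pmf (jump_pmf \<Lambda> P)
             (\<lambda>S. map_pmf (\<lambda>ps. P # ps) (jump_path \<Lambda> m (merge_blocks P S))))"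

definition exp_dist :: "real \<Rightarrow> real measure" where
  "exp_dist l = density lborel (exponential_density l)"

(* Rate of the i-th holding time (dummy rate 1 for the final, absorbing state). *)
definition hold_rate :: "real measure \<Rightarrow> nat set set list \<Rightarrow> nat \<Rightarrow> real" where
  "hold_rate \<Lambda> ps i = (if Suc i < length ps then total_rate \<Lambda> (ps ! i) else 1)"

definition coalescent_space :: "(nat set set list \<times> (nat \<Rightarrow> real)) measure" where
  "coalescent_space = count_space UNIV \<Otimes>\<^sub>M (\<Pi>\<^sub>M i\<in>UNIV. lborel)"

(* Law of the Lambda-coalescent started with n blocks: jump chain plus
   independent exponential holding times (standard CTMC construction).
   An outcome is (ps, h): visited partitions ps and holding times h. *)
definition coalescent_measure :: "real measure \<Rightarrow> nat \<Rightarrow> (nat set set list \<times> (nat \<Rightarrow> real)) measure" where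
  "coalescent_measure \<Lambda> n =
     measure_pmf (jump_path \<Lambda> n (singleton_partition n)) \<bind>
       (\<lambda>ps. distr (\<Pi>\<^sub>M i\<in>UNIV. exp_dist (hold_rate \<Lambda> ps i)) coalescent_space (\<lambda>h. (ps, h)))"

definition jump_time :: "(nat \<Rightarrow> real) \<Rightarrow> nat \<Rightarrow> real" where
  "jump_time h j = (\<Sum>i<j. h i)"

(* Pi_n(t): the partition at time t (number of jumps that occurred by time t). *)
definition state_at :: "nat set set list \<times> (nat \<Rightarrow> real) \<Rightarrow> real \<Rightarrow> nat set set" where
  "state_at \<omega> t = fst \<omega> ! card {j. 0 < j \<and> j < length (fst \<omega>) \<and> jump_time (snd \<omega>) j \<le> t}"

definition block_count :: "nat set set list \<times> (nat \<Rightarrow> real) \<Rightarrow> real \<Rightarrow> nat" where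
  "block_count \<omega> t = card (state_at \<omega> t)"

(* W_n = inf{t >= 0 : N_n(t) <= gamma n}, valued in [0,\<infinity>] (inf of empty set = \<infinity>). *)
definition hitting_time :: "real \<Rightarrow> nat \<Rightarrow> nat set set list \<times> (nat \<Rightarrow> real) \<Rightarrow> ennreal" where
  "hitting_time \<gamma> n \<omega> = (INF t\<in>{t. 0 \<le> t \<and> real (block_count \<omega> t) \<le> \<gamma> * real n}. ennreal t)"

end

theory Submission
  imports Defs
begin

lemma bind_pmf_support_cong:
  assumes "\<And>x. x \<in> set_pmf p \<Longrightarrow> f x = g x" "\<And>x. sets (f x) = sets K" "\<And>x. sets (g x) = sets K"
  shows "measure_pmf p \<bind> f = measure_pmf p \<bind> g"
proof -
  have sa: "subprob_algebra (f (SOME x. x \<in> space (measure_pmf p))) = subprob_algebra (g (SOME x. x \<in> space (measure_pmf p)))"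
    unfolding subprob_algebra_def using assms(2,3) by simp
  have e: "emeasure (measure_pmf p) (f -` A \<inter> space (measure_pmf p)) = emeasure (measure_pmf p) (g -` A \<inter> space (measure_pmf p))" for A
  proof -
    have "(f -` A \<inter> space (measure_pmf p)) \<inter> set_pmf p = (g -` A \<inter> space (measure_pmf p)) \<inter> set_pmf p"
      using assms(1) by auto
    then show ?thesis by (metis emeasure_Int_set_pmf)
  qed
  show ?thesis unfolding bind_def distr_def sa e by simp
qed


lemma sum_Pow_insert:
  assumes "finite F" "x \<notin> F"
  shows "(\<Sum>S\<in>Pow (insert x F). g S) = (\<Sum>S\<in>Pow F. g S) + (\<Sum>S\<in>Pow F. g (insert x S))"
proof -
  have d: "Pow F \<inter> insert x ` Pow F = {}" using assms by auto
  have i: "inj_on (insert x) (Pow F)" using assms unfolding inj_on_def by (auto simp: insert_ident)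
  show ?thesis unfolding Pow_insert
    using assms d by (subst sum.union_disjoint) (auto simp: sum.reindex[OF i])
qed

lemma E0:
  fixes p q :: real
  assumes "finite P" "p + q = 1"
  shows "(\<Sum>S\<in>Pow P. p ^ card S * q ^ (card P - card S)) = 1"
  using assms(1)
proof (induction P rule: finite_induct)
  case empty then show ?case by simp
next
  case (insert x F)
  have c: "S \<in> Pow F \<Longrightarrow> card (insert x S) = Suc (card S) \<and> card S \<le> card F" for S
  proof -
    assume S: "S \<in> Pow F"
    then have "finite S" "x \<notin> S" using insert finite_subset by auto
    then show ?thesis using S insert by (auto simp: card_mono)
  qed
  have "(\<Sum>S\<in>Pow (insert x F). p ^ card S * q ^ (card (insert x F) - card S))
     = (\<Sum>S\<in>Pow F. q * (p ^ card S * q ^ (card F - card S))) + (\<Sum>S\<in>Pow F. p * (p ^ card S * q ^ (card F - card S)))"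
    using insert c by (simp add: sum_Pow_insert Suc_diff_le mult_ac)
  also have "\<dots> = (q + p) * (\<Sum>S\<in>Pow F. p ^ card S * q ^ (card F - card S))"
    by (simp add: sum_distrib_left distrib_right sum.distrib)
  finally show ?case using insert assms by simp
qed

lemma E1:
  fixes p q :: real
  assumes "finite P" "p + q = 1"
  shows "(\<Sum>S\<in>Pow P. p ^ card S * q ^ (card P - card S) * real (card S)) = real (card P) * p"
  using assms(1)
proof (induction P rule: finite_induct)
  case empty then show ?case by simp
next
  case (insert x F)
  have c: "S \<in> Pow F \<Longrightarrow> card (insert x S) = Suc (card S) \<and> card S \<le> card F" for S
  proof -
    assume S: "S \<in> Pow F"
    then have "finite S" "x \<notin> S" using insert finite_subset by auto
    then show ?thesis using S insert by (auto simp: card_mono)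
  qed
  have "(\<Sum>S\<in>Pow (insert x F). p ^ card S * q ^ (card (insert x F) - card S) * real (card S))
     = (\<Sum>S\<in>Pow F. q * (p ^ card S * q ^ (card F - card S) * real (card S))) 
       + ((\<Sum>S\<in>Pow F. p * (p ^ card S * q ^ (card F - card S) * real (card S)))
       + (\<Sum>S\<in>Pow F. p * (p ^ card S * q ^ (card F - card S))))"
    using insert c by (simp add: sum_Pow_insert Suc_diff_le sum.distrib[symmetric] algebra_simps)
  also have "\<dots> = (q + p) * (real (card F) * p) + p"
    using E0[OF insert(1) assms(2)] insert(3)
    by (simp add: sum_distrib_left[symmetric] distrib_right)
  also have "\<dots> = real (card F) * p + p"
    using assms(2) by (simp add: add.commute)
  also have "\<dots> = real (card (insert x F)) * p"
    using insert by (simp add: distrib_right)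
  finally show ?case .
qed


lemma hb:
  fixes p :: real
  assumes "0 \<le> p" "p \<le> 1" "1 \<le> b"
  shows "(real b - 1) * p^2 \<le> real b * p - 1 + (1 - p) ^ b"
  using assms(3)
proof (induction b rule: dec_induct)
  case base then show ?case by simp
next
  case (step m)
  have "(1 - p) ^ m \<le> (1 - p) ^ 1" using assms step(1)
    by (intro power_decreasing) auto
  then have "(1 - p) ^ m \<le> 1 - p" by simp
  then have "p * p \<le> p * (1 - (1-p)^m)" using assms by (intro mult_left_mono) auto
  moreover have "real (Suc m) * p - 1 + (1 - p) ^ Suc m = (real m * p - 1 + (1 - p) ^ m) + p * (1 - (1-p)^m)"
    by (simp add: algebra_simps)
  moreover have "(real (Suc m) - 1) * p^2 = (real m - 1) * p^2 + p * p"
    by (simp add: algebra_simps power2_eq_square)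
  ultimately show ?case using step(3) by linarith
qed

lemma mc_sub: "merge_choices P \<subseteq> Pow P" unfolding merge_choices_def by auto

lemma finite_mc: "finite P \<Longrightarrow> finite (merge_choices P)"
  using mc_sub by (metis finite_Pow_iff finite_subset)

lemma pointwise_drift:
  fixes p :: real
  assumes "finite P" "2 \<le> card P" "0 \<le> p" "p \<le> 1"
  shows "real (card P) - 1 \<le> (\<Sum>S\<in>merge_choices P. p ^ (card S - 2) * (1 - p) ^ (card P - card S) * (real (card S) - 1))"
proof (cases "p = 0")
  case True
  let ?T = "{S. S \<subseteq> P \<and> card S = 2}"
  have sub: "?T \<subseteq> merge_choices P" unfolding merge_choices_def by auto
  have "card P - 1 \<le> card P choose 2"
  proof -
    have h: "2 * (card P - 1) \<le> card P * (card P - 1)" using assms(2) by simp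
    show ?thesis using div_le_mono[OF h, of 2] by (simp add: choose_two)
  qed
  then have "real (card P) - 1 \<le> real (card P choose 2)" using assms(2) by linarith
  also have "\<dots> = (\<Sum>S\<in>?T. p ^ (card S - 2) * (1 - p) ^ (card P - card S) * (real (card S) - 1))"
    using True n_subsets[OF assms(1), of 2] by simp
  also have "\<dots> \<le> (\<Sum>S\<in>merge_choices P. p ^ (card S - 2) * (1 - p) ^ (card P - card S) * (real (card S) - 1))"
    using sub finite_mc[OF assms(1)] assms True
    by (intro sum_mono2) (auto simp: merge_choices_def)
  finally show ?thesis .
next
  case False
  then have pp: "0 < p" using assms by simp
  let ?b = "card P" let ?q = "1 - p"
  define f :: "nat set set \<Rightarrow> real" where "f S = p ^ card S * ?q ^ (?b - card S) * (real (card S) - 1) + (if S = {} then ?q ^ ?b else 0)" for S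
  have "(\<Sum>S\<in>merge_choices P. f S) = (\<Sum>S\<in>Pow P. f S)"
  proof (rule sum.mono_neutral_left)
    show "\<forall>i\<in>Pow P - merge_choices P. f i = 0"
    proof
      fix S assume S: "S \<in> Pow P - merge_choices P"
      then have "card S < 2" unfolding merge_choices_def by auto
      then have "card S = 0 \<or> card S = 1" by auto
      moreover have "finite S" using S assms(1) finite_subset by auto
      ultimately show "f S = 0" unfolding f_def by auto
    qed
  qed (use assms finite_mc mc_sub in auto)
  also have "\<dots> = real ?b * p - 1 + ?q ^ ?b"
  proof -
    have "(\<Sum>S\<in>Pow P. f S) = (\<Sum>S\<in>Pow P. p ^ card S * ?q ^ (?b - card S) * real (card S))
        - (\<Sum>S\<in>Pow P. p ^ card S * ?q ^ (?b - card S)) + (\<Sum>S\<in>Pow P. (if S = {} then ?q ^ ?b else 0))"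
      unfolding f_def by (simp add: sum.distrib sum_subtractf right_diff_distrib)
    also have "(\<Sum>S\<in>Pow P. (if S = {} then ?q ^ ?b else 0)) = ?q ^ ?b"
      using assms(1) by (simp add: sum.delta)
    finally show ?thesis using E0[OF assms(1), of p ?q] E1[OF assms(1), of p ?q] by simp
  qed
  finally have eq: "(\<Sum>S\<in>merge_choices P. f S) = real ?b * p - 1 + ?q ^ ?b" .
  have eq2: "(\<Sum>S\<in>merge_choices P. f S) = p^2 * (\<Sum>S\<in>merge_choices P. p ^ (card S - 2) * ?q ^ (?b - card S) * (real (card S) - 1))"
    unfolding sum_distrib_left
  proof (rule sum.cong[OF refl])
    fix S assume "S \<in> merge_choices P"
    then have "2 \<le> card S" "S \<noteq> {}" unfolding merge_choices_def by auto
    then have "p ^ card S = p^2 * p ^ (card S - 2)"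
      by (metis le_add_diff_inverse power_add)
    then show "f S = p^2 * (p ^ (card S - 2) * ?q ^ (?b - card S) * (real (card S) - 1))"
      unfolding f_def using \<open>S \<noteq> {}\<close> by simp
  qed
  have "(real ?b - 1) * p^2 \<le> p^2 * (\<Sum>S\<in>merge_choices P. p ^ (card S - 2) * ?q ^ (?b - card S) * (real (card S) - 1))"
    using hb[OF assms(3,4), of ?b] assms(2) eq eq2 by simp
  then show ?thesis using pp by (simp add: mult.commute)
qed


locale lam =
  fixes \<Lambda> :: "real measure"
  assumes fin: "finite_measure \<Lambda>"
    and sets_L: "sets \<Lambda> = sets borel"
    and out0: "emeasure \<Lambda> (- {0..1}) = 0"
    and nz: "emeasure \<Lambda> {0..1} \<noteq> 0"
begin

interpretation finite_measure \<Lambda> by (rule fin)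

lemma space_L: "space \<Lambda> = UNIV"
  using sets_eq_imp_space_eq[OF sets_L] by simp

lemma AE01: "AE p in \<Lambda>. 0 \<le> p \<and> p \<le> 1"
proof (rule AE_I')
  show "- {0..1} \<in> null_sets \<Lambda>" using out0 sets_L by (simp add: null_sets_def)
qed (auto simp: space_L)

lemma bm_L: "borel_measurable \<Lambda> = borel_measurable borel"
  using sets_L by (intro measurable_cong_sets) auto

lemma integrable_poly: "integrable \<Lambda> (\<lambda>p::real. p ^ i * (1 - p) ^ j * r)"
proof (rule integrable_const_bound[where B="\<bar>r\<bar>"])
  show "AE p in \<Lambda>. norm (p ^ i * (1 - p) ^ j * r) \<le> \<bar>r\<bar>"
    using AE01
  proof eventually_elim
    case (elim p)
    have a: "p ^ i * (1 - p) ^ j \<le> 1" "0 \<le> p ^ i * (1 - p) ^ j" using elim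
      by (auto intro!: mult_le_one power_le_one)
    have "\<bar>p ^ i * (1 - p) ^ j * r\<bar> = p ^ i * (1 - p) ^ j * \<bar>r\<bar>" using a(2) by (metis abs_mult abs_of_nonneg)
    also have "\<dots> \<le> \<bar>r\<bar>" using a by (intro mult_left_le_one_le) auto
    finally show ?case by simp
  qed
  show "(\<lambda>p::real. p ^ i * (1 - p) ^ j * r) \<in> borel_measurable \<Lambda>"
    unfolding bm_L by measurable
qed

lemma lambda_nonneg: "0 \<le> lambda_rate \<Lambda> b k"
  unfolding lambda_rate_def by (rule integral_nonneg_AE) (use AE01 in auto)

definition cL where "cL = measure \<Lambda> (space \<Lambda>)"

lemma cL_pos: "0 < cL"
proof -
  have "emeasure \<Lambda> {0..1} \<le> emeasure \<Lambda> (space \<Lambda>)"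
    by (rule emeasure_mono) (auto simp: space_L sets_L)
  then have "0 < emeasure \<Lambda> (space \<Lambda>)" using nz by (metis less_le_trans not_gr_zero)
  then show ?thesis unfolding cL_def by (simp add: emeasure_eq_measure)
qed

lemma drift:
  assumes "finite P" "2 \<le> card P"
  shows "cL * (real (card P) - 1) \<le> (\<Sum>S\<in>merge_choices P. lambda_rate \<Lambda> (card P) (card S) * (real (card S) - 1))"
proof -
  have "(\<Sum>S\<in>merge_choices P. lambda_rate \<Lambda> (card P) (card S) * (real (card S) - 1))
     = (\<Sum>S\<in>merge_choices P. \<integral>p. p ^ (card S - 2) * (1 - p) ^ (card P - card S) * (real (card S) - 1) \<partial>\<Lambda>)"
    unfolding lambda_rate_def by simp
  also have "\<dots> = \<integral>p. (\<Sum>S\<in>merge_choices P. p ^ (card S - 2) * (1 - p) ^ (card P - card S) * (real (card S) - 1)) \<partial>\<Lambda>"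
    by (rule sym, rule Bochner_Integration.integral_sum, rule integrable_poly)
  also have "\<dots> \<ge> \<integral>p. (real (card P) - 1) \<partial>\<Lambda>"
  proof (rule integral_mono_AE)
    show "integrable \<Lambda> (\<lambda>p. \<Sum>S\<in>merge_choices P. p ^ (card S - 2) * (1 - p) ^ (card P - card S) * (real (card S) - 1))"
      by (rule Bochner_Integration.integrable_sum) (rule integrable_poly)
  next
    show "AE p in \<Lambda>. real (card P) - 1 \<le> (\<Sum>S\<in>merge_choices P. p ^ (card S - 2) * (1 - p) ^ (card P - card S) * (real (card S) - 1))"
      using AE01 by eventually_elim (simp add: pointwise_drift[OF assms])
  qed (rule integrable_const)
  then show ?thesis using calculation by (simp add: cL_def mult.commute)
qed

lemma total_rate_ge:
  assumes "finite P" "2 \<le> card P"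
  shows "cL \<le> total_rate \<Lambda> P"
proof -
  have "(\<Sum>S\<in>merge_choices P. lambda_rate \<Lambda> (card P) (card S) * (real (card S) - 1))
      \<le> (\<Sum>S\<in>merge_choices P. lambda_rate \<Lambda> (card P) (card S) * (real (card P) - 1))"
  proof (rule sum_mono)
    fix S assume "S \<in> merge_choices P"
    then have "card S \<le> card P" using assms(1) unfolding merge_choices_def by (auto intro: card_mono)
    then have "real (card S) - 1 \<le> real (card P) - 1" by simp
    then show "lambda_rate \<Lambda> (card P) (card S) * (real (card S) - 1) \<le> lambda_rate \<Lambda> (card P) (card S) * (real (card P) - 1)"
      by (rule mult_left_mono) (rule lambda_nonneg)
  qed
  also have "\<dots> = total_rate \<Lambda> P * (real (card P) - 1)"
    unfolding total_rate_def by (simp add: sum_distrib_right)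
  finally have "cL * (real (card P) - 1) \<le> total_rate \<Lambda> P * (real (card P) - 1)"
    using drift[OF assms] by linarith
  moreover have "0 < real (card P) - 1" using assms(2) by simp
  ultimately show ?thesis by (rule mult_right_le_imp_le)
qed

end


lemma merge_finite: "finite P \<Longrightarrow> finite (merge_blocks P S)"
  unfolding merge_blocks_def by simp

lemma merge_card:
  assumes "finite P" "S \<in> merge_choices P"
  shows "card (merge_blocks P S) + card S \<le> card P + 1"
proof -
  have S: "S \<subseteq> P" "finite S" using assms finite_subset unfolding merge_choices_def by auto
  have "card (merge_blocks P S) \<le> Suc (card (P - S))"
    unfolding merge_blocks_def using assms(1) by (simp add: card_insert_le_m1 card_insert_if)
  also have "card (P - S) = card P - card S" using S by (simp add: card_Diff_subset)
  finally show ?thesis using card_mono[OF assms(1) S(1)] by simp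
qed

lemma total_rate_nonneg_gen:
  assumes "\<And>b k. 0 \<le> lambda_rate \<Lambda> b k"
  shows "0 \<le> total_rate \<Lambda> P"
  unfolding total_rate_def using assms by (intro sum_nonneg) auto

context lam begin

lemma total_rate_nonneg: "0 \<le> total_rate \<Lambda> P"
  by (rule total_rate_nonneg_gen) (rule lambda_nonneg)

lemma total_rate_pos: "finite P \<Longrightarrow> 2 \<le> card P \<Longrightarrow> 0 < total_rate \<Lambda> P"
  using total_rate_ge cL_pos by (meson less_le_trans)

lemma pmf_jump:
  assumes "finite P" "2 \<le> card P"
  shows "pmf (jump_pmf \<Lambda> P) S = (if S \<in> merge_choices P then lambda_rate \<Lambda> (card P) (card S) / total_rate \<Lambda> P else 0)"
proof -
  let ?f = "\<lambda>S. if S \<in> merge_choices P then lambda_rate \<Lambda> (card P) (card S) / total_rate \<Lambda> P else 0"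
  have tp: "0 < total_rate \<Lambda> P" using total_rate_pos[OF assms] .
  have nn: "\<And>S. 0 \<le> ?f S" using tp lambda_nonneg by simp
  have "(\<integral>\<^sup>+S. ennreal (?f S) \<partial>count_space UNIV) = (\<Sum>S\<in>merge_choices P. ennreal (?f S))"
    by (rule nn_integral_count_space') (auto simp: finite_mc[OF assms(1)])
  also have "\<dots> = ennreal (\<Sum>S\<in>merge_choices P. ?f S)"
    by (rule sum_ennreal) (rule nn)
  also have "(\<Sum>S\<in>merge_choices P. ?f S) = (\<Sum>S\<in>merge_choices P. lambda_rate \<Lambda> (card P) (card S)) / total_rate \<Lambda> P"
    by (simp add: sum_divide_distrib)
  also have "\<dots> = 1" using tp unfolding total_rate_def by simp
  finally have "(\<integral>\<^sup>+S. ennreal (?f S) \<partial>count_space UNIV) = 1" by simp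
  then show ?thesis unfolding jump_pmf_def using pmf_embed_pmf[of ?f, OF nn] by simp
qed

lemma set_jump:
  assumes "finite P" "2 \<le> card P" "S \<in> set_pmf (jump_pmf \<Lambda> P)"
  shows "S \<in> merge_choices P"
  using assms pmf_jump[OF assms(1,2), of S] by (auto simp: set_pmf_eq split: if_splits)

definition inv_path :: "nat \<Rightarrow> nat set set \<Rightarrow> nat set set list \<Rightarrow> bool" where
  "inv_path m P ps \<longleftrightarrow> ps \<noteq> [] \<and> hd ps = P \<and> (\<forall>Q\<in>set ps. finite Q \<and> card Q \<le> card P)
     \<and> sorted_wrt (\<lambda>A B. card B \<le> card A) ps
     \<and> (\<forall>i. Suc i < length ps \<longrightarrow> 2 \<le> card (ps ! i))
     \<and> (card (last ps) \<le> 1 \<or> card (last ps) + m \<le> card P)"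

lemma inv_path_single: "finite P \<Longrightarrow> inv_path m P [P] \<longleftrightarrow> (card P \<le> 1 \<or> m = 0)"
  unfolding inv_path_def by auto

lemma jump_path_inv:
  assumes "finite P" "ps \<in> set_pmf (jump_path \<Lambda> m P)"
  shows "inv_path m P ps"
  using assms
proof (induction m arbitrary: P ps)
  case 0
  then show ?case by (simp add: inv_path_def)
next
  case (Suc m)
  show ?case
  proof (cases "card P \<le> 1")
    case True
    then show ?thesis using Suc.prems by (simp add: inv_path_def)
  next
    case False
    then have c2: "2 \<le> card P" by simp
    from Suc.prems False obtain S ps' where S: "S \<in> set_pmf (jump_pmf \<Lambda> P)"
      and ps': "ps' \<in> set_pmf (jump_path \<Lambda> m (merge_blocks P S))" and ps: "ps = P # ps'"
      by auto
    have Smc: "S \<in> merge_choices P" using set_jump[OF Suc.prems(1) c2 S] .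
    have S2: "2 \<le> card S" using Smc unfolding merge_choices_def by auto
    let ?P' = "merge_blocks P S"
    have fP': "finite ?P'" using merge_finite[OF Suc.prems(1)] .
    have cP': "card ?P' < card P" using merge_card[OF Suc.prems(1) Smc] S2 by simp
    have IH: "inv_path m ?P' ps'" using Suc.IH[OF fP' ps'] .
    then have ne: "ps' \<noteq> []" and hd': "hd ps' = ?P'" and fin': "\<forall>Q\<in>set ps'. finite Q \<and> card Q \<le> card ?P'"
      and so': "sorted_wrt (\<lambda>A B. card B \<le> card A) ps'"
      and two': "\<forall>i. Suc i < length ps' \<longrightarrow> 2 \<le> card (ps' ! i)"
      and la': "card (last ps') \<le> 1 \<or> card (last ps') + m \<le> card ?P'"
      unfolding inv_path_def by auto
    have "\<forall>i. Suc i < length ps \<longrightarrow> 2 \<le> card (ps ! i)"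
    proof (intro allI impI)
      fix i assume "Suc i < length ps"
      then show "2 \<le> card (ps ! i)" using two' c2 ps by (cases i) auto
    qed
    moreover have "\<forall>Q\<in>set ps. finite Q \<and> card Q \<le> card P"
      using fin' cP' Suc.prems(1) ps by auto
    moreover have "sorted_wrt (\<lambda>A B. card B \<le> card A) ps"
      using so' fin' cP' ps by auto
    moreover have "card (last ps) \<le> 1 \<or> card (last ps) + Suc m \<le> card P"
      using la' cP' ne ps by auto
    ultimately show ?thesis using ps unfolding inv_path_def by simp
  qed
qed

end


definition lead :: "real \<Rightarrow> nat set set list \<Rightarrow> nat" where
  "lead \<theta> ps = length (takeWhile (\<lambda>Q. \<theta> < real (card Q)) ps)"

definition cost :: "real measure \<Rightarrow> real \<Rightarrow> nat set set list \<Rightarrow> real" where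
  "cost \<Lambda> \<theta> ps = (\<Sum>i<lead \<theta> ps. 1 / total_rate \<Lambda> (ps ! i))"

lemma lead_Cons: "lead \<theta> (P # ps) = (if \<theta> < real (card P) then Suc (lead \<theta> ps) else 0)"
  unfolding lead_def by simp

lemma cost_Nil: "cost \<Lambda> \<theta> [] = 0"
  unfolding cost_def lead_def by simp

lemma cost_Cons: "cost \<Lambda> \<theta> (P # ps) = (if \<theta> < real (card P) then 1 / total_rate \<Lambda> P + cost \<Lambda> \<theta> ps else 0)"
  unfolding cost_def lead_Cons by (simp del: sum.lessThan_Suc add: sum.lessThan_Suc_shift)

context lam begin

lemma cost_nonneg: "0 \<le> cost \<Lambda> \<theta> ps"
  unfolding cost_def using total_rate_nonneg by (intro sum_nonneg) simp

lemma single_bound: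
  assumes "1 \<le> \<theta>" "0 < a" "2 \<le> a * cL * \<theta>"
  shows "cost \<Lambda> \<theta> [P] \<le> a * real (card P)"
proof (cases "\<theta> < real (card P)")
  case True
  then have "1 < real (card P)" using assms by simp
  then have "2 \<le> card P" by simp
  then have fP: "finite P" by (metis card.infinite not_numeral_le_zero)
  have t: "cL \<le> total_rate \<Lambda> P" using total_rate_ge[OF fP \<open>2 \<le> card P\<close>] .
  have "1 / total_rate \<Lambda> P \<le> 1 / cL" using t cL_pos by (intro divide_left_mono) auto
  also have "1 / cL \<le> a * real (card P)"
  proof -
    have "a * cL * \<theta> \<le> a * cL * real (card P)" using True assms cL_pos by (intro mult_left_mono) auto
    then have "1 \<le> a * cL * real (card P)" using assms by linarith
    then have "1 \<le> a * real (card P) * cL" by (simp add: ac_simps)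
    then show ?thesis using cL_pos by (simp add: divide_le_eq)
  qed
  finally show ?thesis using True by (simp add: cost_Cons cost_Nil)
qed (use assms in \<open>simp add: cost_Cons cost_Nil\<close>)

lemma step_real:
  assumes fP: "finite P" and c2: "2 \<le> card P" and th: "\<theta> < real (card P)" and a: "0 < a" "2 \<le> a * cL * \<theta>"
  shows "(\<Sum>S\<in>merge_choices P. (1 / total_rate \<Lambda> P + a * real (card (merge_blocks P S))) *
            (lambda_rate \<Lambda> (card P) (card S) / total_rate \<Lambda> P)) \<le> a * real (card P)"
proof -
  define t where "t = total_rate \<Lambda> P"
  define b where "b = real (card P)"
  define l :: "nat set set \<Rightarrow> real" where "l S = lambda_rate \<Lambda> (card P) (card S)" for S
  define D where "D = (\<Sum>S\<in>merge_choices P. l S * (real (card S) - 1))"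
  have tp: "0 < t" unfolding t_def using total_rate_pos[OF fP c2] .
  have ln: "0 \<le> l S" for S unfolding l_def by (rule lambda_nonneg)
  have sw: "(\<Sum>S\<in>merge_choices P. l S) = t" unfolding t_def l_def total_rate_def by simp
  have "(\<Sum>S\<in>merge_choices P. (1 / t + a * real (card (merge_blocks P S))) * (l S / t))
      \<le> (\<Sum>S\<in>merge_choices P. (1 / t + a * (b - (real (card S) - 1))) * (l S / t))"
  proof (rule sum_mono)
    fix S assume S: "S \<in> merge_choices P"
    have "real (card (merge_blocks P S)) \<le> b - (real (card S) - 1)"
      using merge_card[OF fP S] unfolding b_def by linarith
    then have "1 / t + a * real (card (merge_blocks P S)) \<le> 1 / t + a * (b - (real (card S) - 1))"
      using a by simp
    then show "(1 / t + a * real (card (merge_blocks P S))) * (l S / t) \<le> (1 / t + a * (b - (real (card S) - 1))) * (l S / t)"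
      using ln tp by (intro mult_right_mono) auto
  qed
  also have "\<dots> = (\<Sum>S\<in>merge_choices P. (1 / t + a * b) * (l S / t) - a * (l S * (real (card S) - 1) / t))"
    using tp by (intro sum.cong refl) (simp add: field_simps)
  also have "\<dots> = (1 / t + a * b) * ((\<Sum>S\<in>merge_choices P. l S) / t) - a * (D / t)"
    unfolding D_def by (simp add: sum_subtractf sum_distrib_left sum_divide_distrib)
  also have "\<dots> = 1 / t + a * b - a * D / t" using sw tp by simp
  also have "\<dots> \<le> a * b"
  proof -
    have "cL * (b - 1) \<le> D" unfolding D_def l_def b_def using drift[OF fP c2] by simp
    moreover have "\<theta> / 2 \<le> b - 1" using th c2 unfolding b_def by linarith
    ultimately have "cL * (\<theta> / 2) \<le> D" using cL_pos by (meson mult_left_mono less_imp_le order_trans)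
    then have "a * (cL * (\<theta> / 2)) \<le> a * D" using a by (intro mult_left_mono) auto
    moreover have "a * (cL * (\<theta> / 2)) = (a * cL * \<theta>) / 2" by simp
    ultimately have "1 \<le> a * D" using a by linarith
    then have "1 / t \<le> a * D / t" using tp by (simp add: divide_right_mono)
    then show ?thesis by simp
  qed
  finally show ?thesis unfolding t_def l_def b_def .
qed

lemma path_bound:
  assumes "finite P" "1 \<le> \<theta>" "0 < a" "2 \<le> a * cL * \<theta>"
  shows "(\<integral>\<^sup>+ps. ennreal (cost \<Lambda> \<theta> ps) \<partial>jump_path \<Lambda> m P) \<le> ennreal (a * real (card P))"
  using assms(1)
proof (induction m arbitrary: P)
  case 0
  then show ?case using single_bound[OF assms(2-4), of P] by (simp add: ennreal_leI)
next
  case (Suc m)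
  show ?case
  proof (cases "card P \<le> 1")
    case True
    then show ?thesis using single_bound[OF assms(2-4), of P] by (simp add: ennreal_leI)
  next
    case False
    then have c2: "2 \<le> card P" by simp
    show ?thesis
    proof (cases "\<theta> < real (card P)")
      case False
      then show ?thesis using c2 by (simp add: cost_Cons)
    next
      case th: True
      define g where "g S = 1 / total_rate \<Lambda> P + a * real (card (merge_blocks P S))" for S
      have inner: "(\<integral>\<^sup>+ps'. ennreal (cost \<Lambda> \<theta> (P # ps')) \<partial>jump_path \<Lambda> m (merge_blocks P S)) \<le> ennreal (g S)" for S
      proof -
        have "(\<integral>\<^sup>+ps'. ennreal (cost \<Lambda> \<theta> (P # ps')) \<partial>jump_path \<Lambda> m (merge_blocks P S))
            = (\<integral>\<^sup>+ps'. ennreal (1 / total_rate \<Lambda> P) + ennreal (cost \<Lambda> \<theta> ps') \<partial>jump_path \<Lambda> m (merge_blocks P S))"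
          using th total_rate_nonneg cost_nonneg by (intro nn_integral_cong) (simp add: cost_Cons ennreal_plus)
        also have "\<dots> = ennreal (1 / total_rate \<Lambda> P) + (\<integral>\<^sup>+ps'. ennreal (cost \<Lambda> \<theta> ps') \<partial>jump_path \<Lambda> m (merge_blocks P S))"
          by (subst nn_integral_add) (auto simp: measure_pmf.emeasure_space_1)
        also have "\<dots> \<le> ennreal (1 / total_rate \<Lambda> P) + ennreal (a * real (card (merge_blocks P S)))"
          using Suc.IH[OF merge_finite[OF Suc.prems]] by (rule add_left_mono)
        also have "\<dots> = ennreal (g S)" unfolding g_def using total_rate_nonneg assms(3)
          by (simp add: ennreal_plus)
        finally show ?thesis .
      qed
      have "(\<integral>\<^sup>+ps. ennreal (cost \<Lambda> \<theta> ps) \<partial>jump_path \<Lambda> (Suc m) P)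
          = (\<integral>\<^sup>+S. (\<integral>\<^sup>+ps'. ennreal (cost \<Lambda> \<theta> (P # ps')) \<partial>jump_path \<Lambda> m (merge_blocks P S)) \<partial>jump_pmf \<Lambda> P)"
        using False by simp
      also have "\<dots> \<le> (\<integral>\<^sup>+S. ennreal (g S) \<partial>jump_pmf \<Lambda> P)"
        by (intro nn_integral_mono inner)
      also have "\<dots> = (\<Sum>S\<in>merge_choices P. ennreal (g S) * pmf (jump_pmf \<Lambda> P) S)"
        using set_jump[OF Suc.prems c2] by (intro nn_integral_measure_pmf_support) (auto simp: finite_mc[OF Suc.prems])
      also have "\<dots> = (\<Sum>S\<in>merge_choices P. ennreal (g S * (lambda_rate \<Lambda> (card P) (card S) / total_rate \<Lambda> P)))"
      proof (rule sum.cong[OF refl])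
        fix S assume S: "S \<in> merge_choices P"
        have p: "pmf (jump_pmf \<Lambda> P) S = lambda_rate \<Lambda> (card P) (card S) / total_rate \<Lambda> P"
          using pmf_jump[OF Suc.prems c2, of S] S by simp
        have "0 \<le> g S" unfolding g_def using total_rate_nonneg assms(3) by simp
        moreover have "0 \<le> lambda_rate \<Lambda> (card P) (card S) / total_rate \<Lambda> P"
          using total_rate_nonneg lambda_nonneg by simp
        ultimately show "ennreal (g S) * pmf (jump_pmf \<Lambda> P) S = ennreal (g S * (lambda_rate \<Lambda> (card P) (card S) / total_rate \<Lambda> P))"
          unfolding p by (intro ennreal_mult[symmetric])
      qed
      also have "\<dots> = ennreal (\<Sum>S\<in>merge_choices P. g S * (lambda_rate \<Lambda> (card P) (card S) / total_rate \<Lambda> P))"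
        using total_rate_nonneg lambda_nonneg assms(3) by (intro sum_ennreal) (simp add: g_def)
      also have "\<dots> \<le> ennreal (a * real (card P))"
        unfolding g_def by (intro ennreal_leI step_real[OF Suc.prems c2 th assms(3,4)])
      finally show ?thesis .
    qed
  qed
qed

end


definition good :: "real \<Rightarrow> nat set set list \<Rightarrow> bool" where
  "good \<theta> ps \<longleftrightarrow> lead \<theta> ps < length ps \<and> (\<forall>j<length ps. lead \<theta> ps \<le> j \<longrightarrow> real (card (ps ! j)) \<le> \<theta>)"

definition G :: "real \<Rightarrow> nat set set list \<times> (nat \<Rightarrow> real) \<Rightarrow> ennreal" where
  "G \<theta> \<omega> = (if good \<theta> (fst \<omega>) \<and> (\<forall>i. 0 \<le> snd \<omega> i) then ennreal (\<Sum>i<lead \<theta> (fst \<omega>). snd \<omega> i) else \<infinity>)"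

lemma hitting_le_G: "hitting_time \<gamma> n \<omega> \<le> G (\<gamma> * real n) \<omega>"
proof (cases "good (\<gamma> * real n) (fst \<omega>) \<and> (\<forall>i. 0 \<le> snd \<omega> i)")
  case False
  then have "G (\<gamma> * real n) \<omega> = \<infinity>" unfolding G_def by (rule if_not_P)
  then show ?thesis by simp
next
  case True
  define \<theta> where "\<theta> = \<gamma> * real n"
  obtain ps h where \<omega>: "\<omega> = (ps, h)" by (cases \<omega>)
  define K where "K = lead \<theta> ps"
  define t where "t = (\<Sum>i<K. h i)"
  from True have gd: "good \<theta> ps" and hn: "\<And>i. 0 \<le> h i" unfolding \<theta>_def \<omega> by auto
  have KL: "K < length ps" and after: "\<And>j. j < length ps \<Longrightarrow> K \<le> j \<Longrightarrow> real (card (ps ! j)) \<le> \<theta>"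
    using gd unfolding good_def K_def by auto
  have t0: "0 \<le> t" unfolding t_def using hn by (simp add: sum_nonneg)
  define A where "A = {j. 0 < j \<and> j < length ps \<and> jump_time h j \<le> t}"
  have Asub: "A \<subseteq> {1..<length ps}" unfolding A_def by auto
  have fA: "finite A" using Asub finite_subset by blast
  have "{1..K} \<subseteq> A"
  proof
    fix j assume j: "j \<in> {1..K}"
    have "jump_time h j \<le> t" unfolding jump_time_def t_def
      using j hn by (intro sum_mono2) auto
    then show "j \<in> A" using j KL unfolding A_def by auto
  qed
  then have "card {1..K} \<le> card A" by (rule card_mono[OF fA])
  then have "K \<le> card A" by simp
  moreover have "card A \<le> card {1..<length ps}" by (rule card_mono[OF _ Asub]) simp
  then have "card A < length ps" using KL by simp
  ultimately have "real (card (ps ! card A)) \<le> \<theta>" using after by simp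
  moreover have "state_at \<omega> t = ps ! card A"
    unfolding state_at_def \<omega> A_def by simp
  ultimately have "real (block_count \<omega> t) \<le> \<gamma> * real n"
    unfolding block_count_def \<theta>_def by simp
  then have mem: "t \<in> {t. 0 \<le> t \<and> real (block_count \<omega> t) \<le> \<gamma> * real n}" using t0 by simp
  have "hitting_time \<gamma> n \<omega> \<le> ennreal t"
    unfolding hitting_time_def by (rule INF_lower[OF mem])
  also have "ennreal t = G (\<gamma> * real n) \<omega>"
    using True unfolding G_def t_def K_def \<theta>_def \<omega> by simp
  finally show ?thesis .
qed


lemma meas_fst_fun:
  "(\<lambda>\<omega>. f (fst \<omega>)) \<in> measurable (count_space UNIV \<Otimes>\<^sub>M N) (count_space UNIV)"
  by (rule measurable_compose[OF measurable_fst]) simp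

lemma G_meas: "G \<theta> \<in> borel_measurable coalescent_space"
proof -
  let ?M = "count_space UNIV \<Otimes>\<^sub>M (\<Pi>\<^sub>M i\<in>(UNIV::nat set). (lborel::real measure))"
  have snd_i: "(\<lambda>\<omega>. snd \<omega> i) \<in> borel_measurable ?M" for i
  proof (rule measurable_compose[OF measurable_snd])
    show "(\<lambda>x. x i) \<in> borel_measurable (\<Pi>\<^sub>M i\<in>(UNIV::nat set). (lborel::real measure))"
      using measurable_component_singleton[of i UNIV "\<lambda>_. lborel :: real measure"] by simp
  qed
  have sum_m: "(\<lambda>\<omega>. ennreal (\<Sum>i<k. snd \<omega> i)) \<in> borel_measurable ?M" for k
    using snd_i by measurable
  have F: "(\<lambda>\<omega>. ennreal (\<Sum>i<lead \<theta> (fst \<omega>). snd \<omega> i)) \<in> borel_measurable ?M"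
    by (rule measurable_compose_countable[OF sum_m meas_fst_fun])
  have P1: "Measurable.pred ?M (\<lambda>\<omega>. good \<theta> (fst \<omega>))" by (rule meas_fst_fun)
  have P2: "Measurable.pred ?M (\<lambda>\<omega>. \<forall>i. 0 \<le> snd \<omega> i)" using snd_i by measurable
  have P: "Measurable.pred ?M (\<lambda>\<omega>. good \<theta> (fst \<omega>) \<and> (\<forall>i. 0 \<le> snd \<omega> i))"
    using P1 P2 by (rule pred_intros_logic(3))
  have "(\<lambda>\<omega>. if good \<theta> (fst \<omega>) \<and> (\<forall>i. 0 \<le> snd \<omega> i) then ennreal (\<Sum>i<lead \<theta> (fst \<omega>). snd \<omega> i) else \<infinity>) \<in> borel_measurable ?M"
    by (rule measurable_If[OF F measurable_const]) (use P in \<open>auto simp: pred_def\<close>)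
  then show ?thesis unfolding G_def coalescent_space_def by simp
qed


definition rate' :: "real measure \<Rightarrow> nat set set list \<Rightarrow> nat \<Rightarrow> real" where
  "rate' \<Lambda> ps i = (if 0 < hold_rate \<Lambda> ps i then hold_rate \<Lambda> ps i else 1)"

definition kern' :: "real measure \<Rightarrow> nat set set list \<Rightarrow> (nat set set list \<times> (nat \<Rightarrow> real)) measure" where
  "kern' \<Lambda> ps = distr (\<Pi>\<^sub>M i\<in>UNIV. exp_dist (rate' \<Lambda> ps i)) coalescent_space (\<lambda>h. (ps, h))"

lemma rate'_pos: "0 < rate' \<Lambda> ps i"
  unfolding rate'_def by simp

lemma prob_exp: "0 < l \<Longrightarrow> prob_space (exp_dist l)"
  unfolding exp_dist_def by (rule prob_space_exponential_density)

lemma sets_exp: "sets (exp_dist l) = sets borel"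
  unfolding exp_dist_def by simp

lemma sets_Pi_exp: "sets (\<Pi>\<^sub>M i\<in>UNIV. exp_dist (r i)) = sets (\<Pi>\<^sub>M i\<in>(UNIV::nat set). (lborel::real measure))"
  by (rule sets_PiM_cong) (auto simp: sets_exp)

lemma pair_meas: "(\<lambda>h. (ps, h)) \<in> measurable (\<Pi>\<^sub>M i\<in>UNIV. exp_dist (r i)) coalescent_space"
  unfolding coalescent_space_def
  by (rule measurable_Pair[OF measurable_const measurable_ident_sets[OF sets_Pi_exp]]) simp

lemma kern_space: "kern' \<Lambda> ps \<in> space (subprob_algebra coalescent_space)"
proof -
  have "prob_space (\<Pi>\<^sub>M i\<in>UNIV. exp_dist (rate' \<Lambda> ps i))"
    by (rule prob_space_PiM) (rule prob_exp[OF rate'_pos])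
  then have "prob_space (kern' \<Lambda> ps)" unfolding kern'_def
    by (rule prob_space.prob_space_distr) (rule pair_meas)
  then show ?thesis unfolding space_subprob_algebra kern'_def
    by (auto simp: prob_space_imp_subprob_space)
qed

lemma kern_meas: "kern' \<Lambda> \<in> measurable (measure_pmf J) (subprob_algebra coalescent_space)"
  using kern_space by simp

lemma coal_eq:
  assumes "\<And>ps i. ps \<in> set_pmf (jump_path \<Lambda> n (singleton_partition n)) \<Longrightarrow> 0 < hold_rate \<Lambda> ps i"
  shows "coalescent_measure \<Lambda> n = measure_pmf (jump_path \<Lambda> n (singleton_partition n)) \<bind> kern' \<Lambda>"
  unfolding coalescent_measure_def
proof (rule bind_pmf_support_cong[where K=coalescent_space])
  fix ps assume "ps \<in> set_pmf (jump_path \<Lambda> n (singleton_partition n))"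
  then have "(\<lambda>i. exp_dist (hold_rate \<Lambda> ps i)) = (\<lambda>i. exp_dist (rate' \<Lambda> ps i))"
    using assms unfolding rate'_def by auto
  then show "distr (\<Pi>\<^sub>M i\<in>UNIV. exp_dist (hold_rate \<Lambda> ps i)) coalescent_space (Pair ps) = kern' \<Lambda> ps"
    unfolding kern'_def by simp
qed (auto simp: kern'_def)

lemma exp_mean:
  assumes "0 < l"
  shows "(\<integral>\<^sup>+x. ennreal x \<partial>exp_dist l) = ennreal (1 / l)"
proof -
  have "(\<integral>\<^sup>+x. ennreal x \<partial>exp_dist l) = (\<integral>\<^sup>+x. ennreal (exponential_density l x) * ennreal x \<partial>lborel)"
    unfolding exp_dist_def by (subst nn_integral_density) auto
  also have "\<dots> = (\<integral>\<^sup>+x. ennreal (erlang_density 0 l x * x ^ 1) \<partial>lborel)"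
  proof (rule nn_integral_cong)
    fix x :: real
    show "ennreal (exponential_density l x) * ennreal x = ennreal (erlang_density 0 l x * x ^ 1)"
    proof (cases "x < 0")
      case True then show ?thesis by (simp add: exponential_density_def)
    next
      case False
      then have "0 \<le> exponential_density l x" using assms by (simp add: exponential_density_def)
      then show ?thesis using False by (simp add: ennreal_mult)
    qed
  qed
  also have "\<dots> = ennreal (1 / l)"
    using nn_integral_erlang_ith_moment[OF assms, of 0 1] by simp
  finally show ?thesis .
qed


lemma AE_exp_nonneg: "AE x in exp_dist l. 0 \<le> x"
  unfolding exp_dist_def
  by (subst AE_density) (auto simp: exponential_density_def)

lemma inner:
  assumes gd: "good \<theta> ps" and pos: "\<And>i. Suc i < length ps \<Longrightarrow> 0 < total_rate \<Lambda> (ps ! i)"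
  shows "(\<integral>\<^sup>+\<omega>. G \<theta> \<omega> \<partial>kern' \<Lambda> ps) = ennreal (cost \<Lambda> \<theta> ps)"
proof -
  let ?r = "rate' \<Lambda> ps"
  let ?M = "\<Pi>\<^sub>M i\<in>UNIV. exp_dist (?r i)"
  interpret P: product_prob_space "\<lambda>i. exp_dist (?r i)" UNIV
    by (intro product_prob_spaceI prob_exp rate'_pos)
  define K where "K = lead \<theta> ps"
  have KL: "K < length ps" using gd unfolding good_def K_def by simp
  have AEnn: "AE h in ?M. \<forall>i. 0 \<le> h i"
    unfolding AE_all_countable by (intro allI P.AE_component AE_exp_nonneg) simp
  have comp: "(\<lambda>h. h i) \<in> borel_measurable ?M" for i
    using measurable_component_singleton[of i UNIV "\<lambda>i. exp_dist (?r i)"]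
    by (simp add: measurable_cong_sets[OF refl sets_exp])
  have "(\<integral>\<^sup>+\<omega>. G \<theta> \<omega> \<partial>kern' \<Lambda> ps) = (\<integral>\<^sup>+h. G \<theta> (ps, h) \<partial>?M)"
    unfolding kern'_def by (rule nn_integral_distr[OF pair_meas]) (simp add: G_meas)
  also have "\<dots> = (\<integral>\<^sup>+h. (\<Sum>i<K. ennreal (h i)) \<partial>?M)"
    using AEnn
  proof (rule nn_integral_cong_AE[OF eventually_mono])
    fix h :: "nat \<Rightarrow> real" assume "\<forall>i. 0 \<le> h i"
    then show "G \<theta> (ps, h) = (\<Sum>i<K. ennreal (h i))"
      using gd unfolding G_def K_def by (simp add: sum_ennreal)
  qed
  also have "\<dots> = (\<Sum>i<K. \<integral>\<^sup>+h. ennreal (h i) \<partial>?M)"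
    by (rule nn_integral_sum) (use comp in measurable)
  also have "\<dots> = (\<Sum>i<K. ennreal (1 / total_rate \<Lambda> (ps ! i)))"
  proof (rule sum.cong[OF refl])
    fix i assume i: "i \<in> {..<K}"
    then have "Suc i < length ps" using KL by simp
    then have ri: "?r i = total_rate \<Lambda> (ps ! i)"
      using pos unfolding rate'_def hold_rate_def by simp
    have "(\<integral>\<^sup>+h. ennreal (h i) \<partial>?M) = (\<integral>\<^sup>+x. ennreal x \<partial>distr ?M (exp_dist (?r i)) (\<lambda>h. h i))"
      by (rule nn_integral_distr[symmetric]) (simp_all add: measurable_component_singleton measurable_cong_sets[OF sets_exp refl])
    also have "\<dots> = (\<integral>\<^sup>+x. ennreal x \<partial>exp_dist (?r i))"
      by (subst P.PiM_component) simp_all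
    also have "\<dots> = ennreal (1 / ?r i)" by (rule exp_mean[OF rate'_pos])
    finally show "(\<integral>\<^sup>+h. ennreal (h i) \<partial>?M) = ennreal (1 / total_rate \<Lambda> (ps ! i))" using ri by simp
  qed
  also have "\<dots> = ennreal (cost \<Lambda> \<theta> ps)"
    unfolding cost_def K_def[symmetric]
    using pos KL by (intro sum_ennreal) (auto intro: less_imp_le)
  finally show ?thesis .
qed


lemma card_singleton_partition: "card (singleton_partition n) = n"
  unfolding singleton_partition_def by (subst card_image) (auto simp: inj_on_def)

lemma finite_singleton_partition: "finite (singleton_partition n)"
  unfolding singleton_partition_def by simp

context lam begin

lemma support_facts:
  assumes n: "1 \<le> \<theta>" and ps: "ps \<in> set_pmf (jump_path \<Lambda> (card P) P)" and fP: "finite P"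
  shows "good \<theta> ps" "\<And>i. Suc i < length ps \<Longrightarrow> 0 < total_rate \<Lambda> (ps ! i)"
    "\<And>i. 0 < hold_rate \<Lambda> ps i"
proof -
  have iv: "inv_path (card P) P ps" by (rule jump_path_inv[OF fP ps])
  then have ne: "ps \<noteq> []" and fin: "\<forall>Q\<in>set ps. finite Q"
    and so: "sorted_wrt (\<lambda>A B. card B \<le> card A) ps"
    and two: "\<forall>i. Suc i < length ps \<longrightarrow> 2 \<le> card (ps ! i)"
    and la: "card (last ps) \<le> 1 \<or> card (last ps) + card P \<le> card P"
    unfolding inv_path_def by auto
  have la1: "card (last ps) \<le> 1" using la by auto
  show tp: "\<And>i. Suc i < length ps \<Longrightarrow> 0 < total_rate \<Lambda> (ps ! i)"
  proof -
    fix i assume i: "Suc i < length ps"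
    then have "finite (ps ! i)" using fin by (simp add: nth_mem)
    then show "0 < total_rate \<Lambda> (ps ! i)" using two i total_rate_pos by auto
  qed
  show "\<And>i. 0 < hold_rate \<Lambda> ps i"
    unfolding hold_rate_def using tp by simp
  let ?p = "\<lambda>Q. \<theta> < real (card Q)"
  have "\<exists>x\<in>set ps. \<not> ?p x" using ne la1 n by (intro bexI[of _ "last ps"]) auto
  then have L: "lead \<theta> ps < length ps"
  proof (rule contrapos_pp)
    assume "\<not> lead \<theta> ps < length ps"
    then have "length (takeWhile ?p ps) = length ps"
      using length_takeWhile_le[of ?p ps] unfolding lead_def by linarith
    then have "takeWhile ?p ps = ps" by (metis takeWhile_eq_take take_all order_refl)
    then show "\<not> (\<exists>x\<in>set ps. \<not> ?p x)" by (metis takeWhile_eq_all_conv)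
  qed
  have nL: "\<not> ?p (ps ! lead \<theta> ps)" using L unfolding lead_def by (rule nth_length_takeWhile)
  have "real (card (ps ! j)) \<le> \<theta>" if j: "j < length ps" "lead \<theta> ps \<le> j" for j
  proof (cases "j = lead \<theta> ps")
    case True then show ?thesis using nL by simp
  next
    case False
    then have "card (ps ! j) \<le> card (ps ! lead \<theta> ps)"
      using so j unfolding sorted_wrt_iff_nth_less by auto
    then show ?thesis using nL by linarith
  qed
  then show "good \<theta> ps" unfolding good_def using L by auto
qed

end

theorem mainTheorem6:
  fixes \<Lambda> :: "real measure" and \<gamma> :: real
  assumes "finite_measure \<Lambda>"
    and "sets \<Lambda> = sets borel"
    and "emeasure \<Lambda> (- {0..1}) = 0"
    and "emeasure \<Lambda> {0..1} \<noteq> 0"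
    and "0 < \<gamma>" and "\<gamma> < 1"
  shows "\<exists>C>0. \<forall>n\<ge>2. 1 \<le> \<gamma> * real n \<longrightarrow>
           (\<integral>\<^sup>+\<omega>. hitting_time \<gamma> n \<omega> \<partial>coalescent_measure \<Lambda> n) \<le> ennreal C"
proof -
  interpret L: lam \<Lambda> by (rule lam.intro[OF assms(1-4)])
  define C where "C = 2 / (L.cL * \<gamma>)"
  have cpos: "0 < L.cL" by (rule L.cL_pos)
  have Cpos: "0 < C" unfolding C_def using cpos assms(5) by simp
  have "\<forall>n\<ge>2. 1 \<le> \<gamma> * real n \<longrightarrow> (\<integral>\<^sup>+\<omega>. hitting_time \<gamma> n \<omega> \<partial>coalescent_measure \<Lambda> n) \<le> ennreal C"
  proof (intro allI impI)
    fix n :: nat assume n2: "2 \<le> n" and th1: "1 \<le> \<gamma> * real n"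
    define \<theta> where "\<theta> = \<gamma> * real n"
    define a where "a = 2 / (L.cL * \<theta>)"
    define P0 where "P0 = singleton_partition n"
    define J where "J = jump_path \<Lambda> n P0"
    have th: "1 \<le> \<theta>" unfolding \<theta>_def by (rule th1)
    have thpos: "0 < \<theta>" using th by simp
    have apos: "0 < a" unfolding a_def using cpos thpos by simp
    have a2: "2 \<le> a * L.cL * \<theta>" unfolding a_def using cpos thpos by simp
    have fP0: "finite P0" unfolding P0_def by (rule finite_singleton_partition)
    have cP0: "card P0 = n" unfolding P0_def by (rule card_singleton_partition)
    have supp: "good \<theta> ps \<and> (\<forall>i. Suc i < length ps \<longrightarrow> 0 < total_rate \<Lambda> (ps ! i))
        \<and> (\<forall>i. 0 < hold_rate \<Lambda> ps i)" if ps: "ps \<in> set_pmf J" for ps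
    proof -
      have ps': "ps \<in> set_pmf (jump_path \<Lambda> (card P0) P0)" using ps unfolding J_def cP0 .
      show ?thesis using L.support_facts[OF th ps' fP0] by blast
    qed
    have eqc: "coalescent_measure \<Lambda> n = measure_pmf J \<bind> kern' \<Lambda>"
    proof -
      have "coalescent_measure \<Lambda> n = measure_pmf (jump_path \<Lambda> n (singleton_partition n)) \<bind> kern' \<Lambda>"
      proof (rule coal_eq)
        fix ps i assume "ps \<in> set_pmf (jump_path \<Lambda> n (singleton_partition n))"
        then have "ps \<in> set_pmf J" unfolding J_def P0_def .
        then show "0 < hold_rate \<Lambda> ps i" using supp by blast
      qed
      then show ?thesis unfolding J_def P0_def .
    qed
    have "(\<integral>\<^sup>+\<omega>. hitting_time \<gamma> n \<omega> \<partial>coalescent_measure \<Lambda> n) \<le> (\<integral>\<^sup>+\<omega>. G \<theta> \<omega> \<partial>coalescent_measure \<Lambda> n)"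
      unfolding \<theta>_def by (intro nn_integral_mono hitting_le_G)
    also have "(\<integral>\<^sup>+\<omega>. G \<theta> \<omega> \<partial>coalescent_measure \<Lambda> n) = (\<integral>\<^sup>+ps. (\<integral>\<^sup>+\<omega>. G \<theta> \<omega> \<partial>kern' \<Lambda> ps) \<partial>J)"
      unfolding eqc by (rule nn_integral_bind[OF G_meas kern_meas])
    also have "\<dots> = (\<integral>\<^sup>+ps. ennreal (cost \<Lambda> \<theta> ps) \<partial>J)"
    proof (rule nn_integral_cong_AE, rule AE_pmfI)
      fix ps assume "ps \<in> set_pmf J"
      then have s: "good \<theta> ps" "\<And>i. Suc i < length ps \<Longrightarrow> 0 < total_rate \<Lambda> (ps ! i)"
        using supp by blast+
      show "(\<integral>\<^sup>+\<omega>. G \<theta> \<omega> \<partial>kern' \<Lambda> ps) = ennreal (cost \<Lambda> \<theta> ps)" by (rule inner[OF s])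
    qed
    also have "\<dots> \<le> ennreal (a * real (card P0))"
      using L.path_bound[OF fP0 th apos a2, of n] unfolding J_def .
    also have "a * real (card P0) = C"
    proof -
      have "real n \<noteq> 0" using n2 by simp
      then show ?thesis unfolding a_def C_def \<theta>_def cP0 using cpos assms(5) by (simp add: field_simps)
    qed
    finally show "(\<integral>\<^sup>+\<omega>. hitting_time \<gamma> n \<omega> \<partial>coalescent_measure \<Lambda> n) \<le> ennreal C" .
  qed
  then show ?thesis using Cpos by blast
qed


end
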